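(* For every finite simple undirected graph $G$ on $n\ge 4$ vertices, \[ \lambda_4(G)\ \le\ \frac{1+\sqrt5}{12}\,n-1 . \]
   Context: For a graph $G$ on $n$ vertices, $\lambda_1(G)\ge\cdots\ge\lambda_n(G)$ are the eigenvalues of its adjacency matrix, listed in nonincreasing order. *)

theory Defs
  imports "Jordan_Normal_Form.Char_Poly"
begin

definition simple_graph :: "nat \<Rightarrow> (nat \<Rightarrow> nat \<Rightarrow> bool) \<Rightarrow> bool" where
  "simple_graph n E \<longleftrightarrow> (\<forall>i<n. \<forall>j<n. E i j \<longleftrightarrow> E j i) \<and> (\<forall>i<n. \<not> E i i)"

definition adj_matrix :: "nat \<Rightarrow> (nat \<Rightarrow> nat \<Rightarrow> bool) \<Rightarrow> real mat" where
  "adj_matrix n E = mat n n (\<lambda>(i, j). if E i j then 1 else 0)"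

text \<open>The matrix is real symmetric, so all roots are real.\<close>
definition adj_eigenvalues :: "nat \<Rightarrow> (nat \<Rightarrow> nat \<Rightarrow> bool) \<Rightarrow> real list" where
  "adj_eigenvalues n E = rev (sorted_list_of_multiset (proots (char_poly (adj_matrix n E))))"

text \<open>lambda_k(G), 1-indexed.\<close>
definition graph_lambda :: "nat \<Rightarrow> (nat \<Rightarrow> nat \<Rightarrow> bool) \<Rightarrow> nat \<Rightarrow> real" where
  "graph_lambda n E k = adj_eigenvalues n E ! (k - 1)"

end

theory Submission
  imports Defs "Jordan_Normal_Form.Schur_Decomposition"
begin

lemma xy_le: "(x::real) * y \<le> (x^2 + y^2)/2"
proof -
  have "0 \<le> (x-y)^2" by simp
  hence "2*(x*y) \<le> x^2 + y^2" by (simp add: power2_diff algebra_simps)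
  thus ?thesis by (simp add: field_simps)
qed

lemma sum_sq_le_card:
  fixes f :: "nat \<Rightarrow> real"
  shows "(\<Sum>i<n. f i)^2 \<le> real n * (\<Sum>i<n. (f i)^2)"
proof -
  have "(\<Sum>i<n. f i)^2 = (\<Sum>i<n. \<Sum>j<n. f i * f j)"
    by (simp add: power2_eq_square sum_product)
  also have "\<dots> \<le> (\<Sum>i<n. \<Sum>j<n. ((f i)^2 + (f j)^2)/2)"
    by (intro sum_mono xy_le)
  also have "\<dots> = real n * (\<Sum>i<n. (f i)^2)"
    by (simp add: add_divide_distrib sum.distrib sum_divide_distrib[symmetric] sum_distrib_left[symmetric])
  finally show ?thesis .
qed

lemma kernel_pt:
  fixes s :: real assumes s0: "0 \<le> s" and s1: "s \<le> 1"
  shows "s \<le> (1+sqrt 5)/16 + (7*sqrt 5 - 5)/8 * s^2 + (25 - 15*sqrt 5)/16 * s^4"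
proof -
  define q where "q = sqrt 5"
  have q2: "q^2 = 5" unfolding q_def by simp
  have q_gt: "q > 2" unfolding q_def by (simp add: real_less_rsqrt)
  have id: "5*((1+q) + 2*(7*q - 5) * s^2 + (25 - 15*q) * s^4 - 16*s)
      = (1-s) * (q*s-1)^2 * ((15*q-25) * s + 5*(1+q))"
  proof -
    have "(1-s) * (q*s-1)^2 * ((15*q-25) * s + 5*(1+q)) = 5*((1+q) + 2*(7*q - 5) * s^2 + (25 - 15*q) * s^4 - 16*s)
       + (q^2 - 5) * (10*s^3*q + 5*s^2*q - 15*s^4*q - 15*s^2 - 10*s + 25*s^4)"
      by Groebner_Basis.algebra
    with q2 show ?thesis by simp
  qed
  have nn: "0 \<le> (1-s) * (q*s-1)^2 * ((15*q-25) * s + 5*(1+q))"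
    using s0 s1 q_gt by (intro mult_nonneg_nonneg) auto
  have "0 \<le> 5*((1+q) + 2*(7*q - 5) * s^2 + (25 - 15*q) * s^4 - 16*s)"
    by (subst id) (rule nn)
  hence "0 \<le> (1+q) + 2*(7*q - 5) * s^2 + (25 - 15*q) * s^4 - 16*s" by simp
  thus ?thesis unfolding q_def by (simp add: field_simps)
qed

lemma harm_id:
  fixes x0 x1 x2 y0 y1 y2 :: real
  shows "35 * (x0*y0+x1*y1+x2*y2)^4 - 30*(x0*y0+x1*y1+x2*y2)^2*((x0^2+x1^2+x2^2)*(y0^2+y1^2+y2^2)) + 3*((x0^2+x1^2+x2^2)*(y0^2+y1^2+y2^2))^2
   = 35/8 * ((x0^4 - 6*x0^2*x1^2 + x1^4) * (y0^4 - 6*y0^2*y1^2 + y1^4))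
   + 70 * ((x0^3*x1 - x0*x1^3) * (y0^3*y1 - y0*y1^3))
   + 35 * ((x2*(x0^3 - 3*x0*x1^2)) * (y2*(y0^3 - 3*y0*y1^2)))
   + 35 * ((x2*(3*x0^2*x1 - x1^3)) * (y2*(3*y0^2*y1 - y1^3)))
   + 5/2 * (((7*x2^2 - (x0^2+x1^2+x2^2))*(x0^2-x1^2)) * ((7*y2^2 - (y0^2+y1^2+y2^2))*(y0^2-y1^2)))
   + 10 * (((7*x2^2 - (x0^2+x1^2+x2^2))*(x0*x1)) * ((7*y2^2 - (y0^2+y1^2+y2^2))*(y0*y1)))
   + 5 * ((x2*(7*x2^2 - 3*(x0^2+x1^2+x2^2))*x0) * (y2*(7*y2^2 - 3*(y0^2+y1^2+y2^2))*y0))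
   + 5 * ((x2*(7*x2^2 - 3*(x0^2+x1^2+x2^2))*x1) * (y2*(7*y2^2 - 3*(y0^2+y1^2+y2^2))*y1))
   + 1/8 * ((35*x2^4 - 30*x2^2*(x0^2+x1^2+x2^2) + 3*(x0^2+x1^2+x2^2)^2) * (35*y2^4 - 30*y2^2*(y0^2+y1^2+y2^2) + 3*(y0^2+y1^2+y2^2)^2))"
  by Groebner_Basis.algebra


lemma div3_prod: "((p::real) / x^3) * (q / y^3) = (1/(x*y)^3) * (p*q)"
  by (simp add: power_mult_distrib)

lemma lin9: "(g::real)*(c1*P1 + c2*P2 + c3*P3 + c4*P4 + c5*P5 + c6*P6 + c7*P7 + c8*P8 + c9*P9)
  = c1*(g*P1) + c2*(g*P2) + c3*(g*P3) + c4*(g*P4) + c5*(g*P5) + c6*(g*P6) + c7*(g*P7) + c8*(g*P8) + c9*(g*P9)"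
  by (simp add: algebra_simps)

lemma frame_bound:
  fixes u0 u1 u2 :: "nat \<Rightarrow> real" and n :: nat
  assumes o00: "(\<Sum>i<n. u0 i * u0 i) = 1" and o11: "(\<Sum>i<n. u1 i * u1 i) = 1"
    and o22: "(\<Sum>i<n. u2 i * u2 i) = 1" and o01: "(\<Sum>i<n. u0 i * u1 i) = 0"
    and o02: "(\<Sum>i<n. u0 i * u2 i) = 0" and o12: "(\<Sum>i<n. u1 i * u2 i) = 0"
  shows "(\<Sum>i<n. \<Sum>j<n. \<bar>u0 i*u0 j + u1 i*u1 j + u2 i*u2 j\<bar>) \<le> (1 + sqrt 5)/2 * real n"
proof -
  define X where "X i = (u0 i)^2 + (u1 i)^2 + (u2 i)^2" for i
  define r where "r i = sqrt (X i)" for i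
  define t where "t i j = u0 i*u0 j + u1 i*u1 j + u2 i*u2 j" for i j
  have X0: "0 \<le> X i" for i unfolding X_def by (intro add_nonneg_nonneg) simp_all
  have r0: "0 \<le> r i" for i unfolding r_def using X0 by simp
  have rsq: "(r i)^2 = X i" for i unfolding r_def using X0 by simp
  have tsym: "t i j = t j i" for i j unfolding t_def by (simp add: mult.commute)
  have CS: "(t i j)^2 \<le> X i * X j" for i j
  proof -
    have "X i * X j - (t i j)^2 = (u0 i*u1 j - u1 i*u0 j)^2 + (u0 i*u2 j - u2 i*u0 j)^2 + (u1 i*u2 j - u2 i*u1 j)^2"
      unfolding X_def t_def by Groebner_Basis.algebra
    moreover have "0 \<le> (u0 i*u1 j - u1 i*u0 j)^2 + (u0 i*u2 j - u2 i*u0 j)^2 + (u1 i*u2 j - u2 i*u1 j)^2"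
      by simp
    ultimately show ?thesis by linarith
  qed
  have abst: "\<bar>t i j\<bar> \<le> r i * r j" for i j
  proof -
    have "\<bar>t i j\<bar> = sqrt ((t i j)^2)" by simp
    also have "\<dots> \<le> sqrt (X i * X j)" using CS by (rule real_sqrt_le_mono)
    also have "\<dots> = r i * r j" unfolding r_def by (simp add: real_sqrt_mult)
    finally show ?thesis .
  qed
  have t0: "t i j = 0" if "r i = 0 \<or> r j = 0" for i j
    using abst[of i j] that by auto
  have rowsum: "(\<Sum>j<n. (t i j)^2) = X i" for i
  proof -
    have "(t i j)^2 = u0 i*u0 i*(u0 j*u0 j) + u1 i*u1 i*(u1 j*u1 j) + u2 i*u2 i*(u2 j*u2 j)
       + 2*(u0 i*u1 i)*(u0 j*u1 j) + 2*(u0 i*u2 i)*(u0 j*u2 j) + 2*(u1 i*u2 i)*(u1 j*u2 j)" for j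
      unfolding t_def by Groebner_Basis.algebra
    hence "(\<Sum>j<n. (t i j)^2) = u0 i*u0 i*(\<Sum>j<n. u0 j*u0 j) + u1 i*u1 i*(\<Sum>j<n. u1 j*u1 j)
       + u2 i*u2 i*(\<Sum>j<n. u2 j*u2 j)
       + 2*(u0 i*u1 i)*(\<Sum>j<n. u0 j*u1 j) + 2*(u0 i*u2 i)*(\<Sum>j<n. u0 j*u2 j) + 2*(u1 i*u2 i)*(\<Sum>j<n. u1 j*u2 j)"
      by (simp add: sum.distrib sum_distrib_left)
    also have "\<dots> = X i" unfolding X_def using o00 o11 o22 o01 o02 o12 by (simp add: power2_eq_square)
    finally show ?thesis .
  qed
  have sumX: "(\<Sum>i<n. X i) = 3"
    using o00 o11 o22 unfolding X_def by (simp add: sum.distrib power2_eq_square)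
  define R where "R = (\<Sum>i<n. r i)"
  have R2: "R^2 \<le> 3 * real n"
    using sum_sq_le_card[of r n] unfolding R_def rsq sumX by simp
  have R2sum: "R^2 = (\<Sum>i<n. \<Sum>j<n. r i * r j)"
    unfolding R_def by (simp add: power2_eq_square sum_product)
  define Z2 where "Z2 = (\<Sum>i<n. \<Sum>j<n. (t i j)^2 / (r i * r j))"
  have Z2le: "Z2 \<le> real n"
  proof -
    have pt: "(t i j)^2 / (r i * r j) \<le> ((t i j)^2 / X i + (t i j)^2 / X j)/2" for i j
    proof (cases "r i = 0 \<or> r j = 0")
      case True thus ?thesis using t0[OF True] by simp
    next
      case False
      hence ri: "r i > 0" and rj: "r j > 0" using r0 by (auto simp: order_le_less)
      have "(t i j)^2 / (r i * r j) = (t i j)^2 * ((1/r i) * (1/ r j))" by simp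
      also have "\<dots> \<le> (t i j)^2 * (((1/r i)^2 + (1/r j)^2)/2)"
        by (rule mult_left_mono[OF xy_le]) simp
      also have "\<dots> = ((t i j)^2 / X i + (t i j)^2 / X j)/2"
        by (simp add: rsq[symmetric] power_one_over field_simps)
      finally show ?thesis .
    qed
    have h1: "(\<Sum>i<n. \<Sum>j<n. (t i j)^2 / X i) \<le> real n"
    proof -
      have "(\<Sum>i<n. \<Sum>j<n. (t i j)^2 / X i) = (\<Sum>i<n. X i / X i)"
        by (simp add: sum_divide_distrib[symmetric] rowsum)
      also have "\<dots> \<le> (\<Sum>i<n. 1)" by (intro sum_mono) simp
      finally show ?thesis by simp
    qed
    have h2: "(\<Sum>i<n. \<Sum>j<n. (t i j)^2 / X j) = (\<Sum>i<n. \<Sum>j<n. (t i j)^2 / X i)"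
      by (subst sum.swap) (simp add: tsym)
    have "Z2 \<le> (\<Sum>i<n. \<Sum>j<n. ((t i j)^2 / X i + (t i j)^2 / X j)/2)"
      unfolding Z2_def by (intro sum_mono pt)
    also have "\<dots> = ((\<Sum>i<n. \<Sum>j<n. (t i j)^2 / X i) + (\<Sum>i<n. \<Sum>j<n. (t i j)^2 / X j))/2"
      by (simp add: sum.distrib add_divide_distrib sum_divide_distrib)
    also have "\<dots> \<le> real n" using h1 h2 by simp
    finally show ?thesis .
  qed

  define F4 where "F4 = (\<Sum>i<n. \<Sum>j<n. (t i j)^4 / (r i * r j)^3)"
  define H1 where "H1 i = ((u0 i)^4 - 6*(u0 i)^2*(u1 i)^2 + (u1 i)^4) / (r i)^3" for i
  define H2 where "H2 i = ((u0 i)^3*u1 i - u0 i*(u1 i)^3) / (r i)^3" for i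
  define H3 where "H3 i = (u2 i*((u0 i)^3 - 3*u0 i*(u1 i)^2)) / (r i)^3" for i
  define H4 where "H4 i = (u2 i*(3*(u0 i)^2*u1 i - (u1 i)^3)) / (r i)^3" for i
  define H5 where "H5 i = ((7*(u2 i)^2 - ((u0 i)^2+(u1 i)^2+(u2 i)^2))*((u0 i)^2-(u1 i)^2)) / (r i)^3" for i
  define H6 where "H6 i = ((7*(u2 i)^2 - ((u0 i)^2+(u1 i)^2+(u2 i)^2))*(u0 i*u1 i)) / (r i)^3" for i
  define H7 where "H7 i = (u2 i*(7*(u2 i)^2 - 3*((u0 i)^2+(u1 i)^2+(u2 i)^2))*u0 i) / (r i)^3" for i
  define H8 where "H8 i = (u2 i*(7*(u2 i)^2 - 3*((u0 i)^2+(u1 i)^2+(u2 i)^2))*u1 i) / (r i)^3" for i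
  define H9 where "H9 i = (35*(u2 i)^4 - 30*(u2 i)^2*((u0 i)^2+(u1 i)^2+(u2 i)^2) + 3*((u0 i)^2+(u1 i)^2+(u2 i)^2)^2) / (r i)^3" for i
  have ptsos: "35*((t i j)^4 / (r i * r j)^3) - 30*((t i j)^2 / (r i * r j)) + 3*(r i * r j)
     = 35/8 * (H1 i * H1 j) + 70 * (H2 i * H2 j) + 35 * (H3 i * H3 j) + 35 * (H4 i * H4 j)
     + 5/2 * (H5 i * H5 j) + 10 * (H6 i * H6 j) + 5 * (H7 i * H7 j) + 5 * (H8 i * H8 j) + 1/8 * (H9 i * H9 j)"
    for i j
  proof (cases "r i = 0 \<or> r j = 0")
    case True
    thus ?thesis using t0[OF True]
      by (auto simp: H1_def H2_def H3_def H4_def H5_def H6_def H7_def H8_def H9_def)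
  next
    case False
    hence ri: "r i \<noteq> 0" and rj: "r j \<noteq> 0" by auto
    define g where "g = 1 / (r i * r j)^3"
    have rr2: "(r i * r j)^2 = X i * X j" by (simp add: power_mult_distrib rsq)
    have "35*((t i j)^4 / (r i * r j)^3) - 30*((t i j)^2 / (r i * r j)) + 3*(r i * r j)
       = g * (35*(t i j)^4 - 30*(t i j)^2*(r i * r j)^2 + 3*((r i * r j)^2)^2)"
      unfolding g_def using ri rj by (simp add: field_simps) Groebner_Basis.algebra
    also have "\<dots> = g * (35*(t i j)^4 - 30*(t i j)^2*(X i * X j) + 3*(X i * X j)^2)"
      unfolding rr2 ..
    also have "\<dots> = g * (35/8 * ((u0 i^4 - 6*u0 i^2*u1 i^2 + u1 i^4) * (u0 j^4 - 6*u0 j^2*u1 j^2 + u1 j^4))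
   + 70 * ((u0 i^3*u1 i - u0 i*u1 i^3) * (u0 j^3*u1 j - u0 j*u1 j^3))
   + 35 * ((u2 i*(u0 i^3 - 3*u0 i*u1 i^2)) * (u2 j*(u0 j^3 - 3*u0 j*u1 j^2)))
   + 35 * ((u2 i*(3*u0 i^2*u1 i - u1 i^3)) * (u2 j*(3*u0 j^2*u1 j - u1 j^3)))
   + 5/2 * (((7*u2 i^2 - (u0 i^2+u1 i^2+u2 i^2))*(u0 i^2-u1 i^2)) * ((7*u2 j^2 - (u0 j^2+u1 j^2+u2 j^2))*(u0 j^2-u1 j^2)))
   + 10 * (((7*u2 i^2 - (u0 i^2+u1 i^2+u2 i^2))*(u0 i*u1 i)) * ((7*u2 j^2 - (u0 j^2+u1 j^2+u2 j^2))*(u0 j*u1 j)))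
   + 5 * ((u2 i*(7*u2 i^2 - 3*(u0 i^2+u1 i^2+u2 i^2))*u0 i) * (u2 j*(7*u2 j^2 - 3*(u0 j^2+u1 j^2+u2 j^2))*u0 j))
   + 5 * ((u2 i*(7*u2 i^2 - 3*(u0 i^2+u1 i^2+u2 i^2))*u1 i) * (u2 j*(7*u2 j^2 - 3*(u0 j^2+u1 j^2+u2 j^2))*u1 j))
   + 1/8 * ((35*u2 i^4 - 30*u2 i^2*(u0 i^2+u1 i^2+u2 i^2) + 3*(u0 i^2+u1 i^2+u2 i^2)^2) * (35*u2 j^4 - 30*u2 j^2*(u0 j^2+u1 j^2+u2 j^2) + 3*(u0 j^2+u1 j^2+u2 j^2)^2)))"
      unfolding t_def X_def by (rule arg_cong[where f="\<lambda>z. g * z"], rule harm_id)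
    also have "\<dots> = 35/8 * (H1 i * H1 j) + 70 * (H2 i * H2 j) + 35 * (H3 i * H3 j) + 35 * (H4 i * H4 j)
     + 5/2 * (H5 i * H5 j) + 10 * (H6 i * H6 j) + 5 * (H7 i * H7 j) + 5 * (H8 i * H8 j) + 1/8 * (H9 i * H9 j)"
      unfolding H1_def H2_def H3_def H4_def H5_def H6_def H7_def H8_def H9_def div3_prod g_def[symmetric]
      by (rule lin9)
    finally show ?thesis .
  qed
  have dsq: "(\<Sum>i<n. \<Sum>j<n. c * (f i * f j)) = c * (\<Sum>i<n. f i)^2" for c :: real and f
  proof -
    have "(\<Sum>i<n. f i)^2 = (\<Sum>i<n. \<Sum>j<n. f i * f j)"
      unfolding power2_eq_square by (rule sum_product)
    thus ?thesis by (simp add: sum_distrib_left)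
  qed
  have SOS: "0 \<le> 35 * F4 - 30 * Z2 + 3 * R^2"
  proof -
    have "35 * F4 - 30 * Z2 + 3 * R^2 = (\<Sum>i<n. \<Sum>j<n. 35*((t i j)^4 / (r i * r j)^3) - 30*((t i j)^2 / (r i * r j)) + 3*(r i * r j))"
      unfolding F4_def Z2_def R2sum by (simp add: sum.distrib sum_subtractf sum_distrib_left)
    also have "\<dots> = 35/8 * (\<Sum>i<n. H1 i)^2 + 70 * (\<Sum>i<n. H2 i)^2 + 35 * (\<Sum>i<n. H3 i)^2 + 35 * (\<Sum>i<n. H4 i)^2
     + 5/2 * (\<Sum>i<n. H5 i)^2 + 10 * (\<Sum>i<n. H6 i)^2 + 5 * (\<Sum>i<n. H7 i)^2 + 5 * (\<Sum>i<n. H8 i)^2 + 1/8 * (\<Sum>i<n. H9 i)^2"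
      unfolding ptsos by (simp only: sum.distrib dsq)
    also have "\<dots> \<ge> 0" by simp
    finally show ?thesis .
  qed
  define a where "a = (1+sqrt 5)/16"
  define b where "b = (7*sqrt 5 - 5)/8"
  define c where "c = (25 - 15*sqrt 5)/16"
  have pt: "\<bar>t i j\<bar> \<le> a * (r i * r j) + b * ((t i j)^2 / (r i * r j)) + c * ((t i j)^4 / (r i * r j)^3)" for i j
  proof (cases "r i = 0 \<or> r j = 0")
    case True thus ?thesis using t0[OF True] by auto
  next
    case False
    define p where "p = r i * r j"
    have "r i > 0" "r j > 0" using False r0[of i] r0[of j] by auto
    hence p0: "p > 0" unfolding p_def by simp
    define s where "s = \<bar>t i j\<bar> / p"
    have s0: "0 \<le> s" unfolding s_def using p0 by simp
    have s1: "s \<le> 1" unfolding s_def using p0 abst[of i j] p_def by simp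
    have k: "s \<le> a + b * s^2 + c * s^4" using kernel_pt[OF s0 s1] unfolding a_def b_def c_def .
    have "\<bar>t i j\<bar> = p * s" unfolding s_def using p0 by simp
    also have "\<dots> \<le> p * (a + b * s^2 + c * s^4)" using k p0 by (intro mult_left_mono) auto
    also have "\<dots> = a * p + b * ((t i j)^2 / p) + c * ((t i j)^4 / p^3)"
      unfolding s_def using p0 by (simp add: field_simps power2_abs power_even_abs_numeral) Groebner_Basis.algebra
    finally show ?thesis unfolding p_def .
  qed
  have total: "(\<Sum>i<n. \<Sum>j<n. \<bar>t i j\<bar>) \<le> a * R^2 + b * Z2 + c * F4"
  proof -
    have "(\<Sum>i<n. \<Sum>j<n. \<bar>t i j\<bar>) \<le> (\<Sum>i<n. \<Sum>j<n. a * (r i * r j) + b * ((t i j)^2 / (r i * r j)) + c * ((t i j)^4 / (r i * r j)^3))"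
      by (intro sum_mono pt)
    also have "\<dots> = a * R^2 + b * Z2 + c * F4"
      unfolding R2sum Z2_def F4_def by (simp add: sum.distrib sum_distrib_left)
    finally show ?thesis .
  qed
  have q2: "2 < sqrt 5" by (simp add: real_less_rsqrt)
  have c0: "c \<le> 0" unfolding c_def using q2 by simp
  have cF: "c * F4 \<le> c * ((30 * Z2 - 3 * R^2)/35)"
    using SOS c0 by (intro mult_left_mono_neg) auto
  have A0: "0 \<le> a - 3*c/35" unfolding a_def c_def using q2 by simp
  have B0: "0 \<le> b + 6*c/7" unfolding b_def c_def using q2 by (simp add: field_simps)
  have "a * R^2 + b * Z2 + c * F4 \<le> (a - 3*c/35) * R^2 + (b + 6*c/7) * Z2"
    using cF by (simp add: algebra_simps)
  also have "\<dots> \<le> (a - 3*c/35) * (3 * real n) + (b + 6*c/7) * real n"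
    using A0 B0 R2 Z2le by (intro add_mono mult_left_mono) auto
  also have "\<dots> = (1 + sqrt 5)/2 * real n"
    unfolding a_def b_def c_def by (simp add: field_simps)
  finally show ?thesis using total unfolding t_def by linarith
qed


lemma sum4: "(\<Sum>k<(4::nat). f k) = f 0 + f 1 + f 2 + (f 3 :: real)"
  by (simp add: eval_nat_numeral)

lemma quat:
  fixes c :: "nat \<Rightarrow> real"
  shows "\<exists>q0 q1 q2 :: nat \<Rightarrow> real.
    (\<Sum>k<4. q0 k * q0 k) = 1 \<and> (\<Sum>k<4. q1 k * q1 k) = 1 \<and> (\<Sum>k<4. q2 k * q2 k) = 1 \<and>
    (\<Sum>k<4. q0 k * q1 k) = 0 \<and> (\<Sum>k<4. q0 k * q2 k) = 0 \<and> (\<Sum>k<4. q1 k * q2 k) = 0 \<and>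
    (\<Sum>k<4. q0 k * c k) = 0 \<and> (\<Sum>k<4. q1 k * c k) = 0 \<and> (\<Sum>k<4. q2 k * c k) = 0"
proof (cases "(\<Sum>k<4. c k * c k) = 0")
  case True
  have cz: "c k = 0" if k: "k < 4" for k
  proof -
    have "c k * c k \<le> (\<Sum>k<4. c k * c k)" using k by (intro member_le_sum) auto
    hence "c k * c k \<le> 0" using True by simp
    moreover have "0 \<le> c k * c k" by simp
    ultimately have "c k * c k = 0" by linarith
    thus ?thesis by simp
  qed
  define q0 where "q0 k = (if k = 0 then 1 else 0 :: real)" for k :: nat
  define q1 where "q1 k = (if k = 1 then 1 else 0 :: real)" for k :: nat
  define q2 where "q2 k = (if k = 2 then 1 else 0 :: real)" for k :: nat
  have e1: "(\<Sum>k<4. q0 k * q0 k) = 1" unfolding sum4 q0_def by simp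
  have e2: "(\<Sum>k<4. q1 k * q1 k) = 1" unfolding sum4 q1_def by simp
  have e3: "(\<Sum>k<4. q2 k * q2 k) = 1" unfolding sum4 q2_def by simp
  have e4: "(\<Sum>k<4. q0 k * q1 k) = 0" unfolding sum4 q0_def q1_def by simp
  have e5: "(\<Sum>k<4. q0 k * q2 k) = 0" unfolding sum4 q0_def q2_def by simp
  have e6: "(\<Sum>k<4. q1 k * q2 k) = 0" unfolding sum4 q1_def q2_def by simp
  have e7: "(\<Sum>k<4. q0 k * c k) = 0" by (intro sum.neutral) (simp add: cz)
  have e8: "(\<Sum>k<4. q1 k * c k) = 0" by (intro sum.neutral) (simp add: cz)
  have e9: "(\<Sum>k<4. q2 k * c k) = 0" by (intro sum.neutral) (simp add: cz)
  show ?thesis using e1 e2 e3 e4 e5 e6 e7 e8 e9 by blast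
next
  case False
  define N where "N = sqrt (\<Sum>k<4. c k * c k)"
  have pos: "(\<Sum>k<4. c k * c k) > 0" using False
    by (metis (no_types, lifting) order_le_less sum_nonneg zero_le_square)
  have N0: "N \<noteq> 0" unfolding N_def using pos by simp
  have s4: "(\<Sum>k<4. c k * c k) = c 0 * c 0 + c 1 * c 1 + c 2 * c 2 + c 3 * c 3" by (rule sum4)
  have "N * N = (\<Sum>k<4. c k * c k)" unfolding N_def using pos by simp
  hence N2: "N * N = c 0 * c 0 + c 1 * c 1 + c 2 * c 2 + c 3 * c 3" unfolding s4 .
  define q0 where "q0 k = (if k = 0 then - c 1 else if k = 1 then c 0 else if k = 2 then - c 3 else c 2) / N" for k :: nat
  define q1 where "q1 k = (if k = 0 then - c 2 else if k = 1 then c 3 else if k = 2 then c 0 else - c 1) / N" for k :: nat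
  define q2 where "q2 k = (if k = 0 then - c 3 else if k = 1 then - c 2 else if k = 2 then c 1 else c 0) / N" for k :: nat
  have nn: "(c 0 * c 0 + c 1 * c 1 + c 2 * c 2 + c 3 * c 3) / (N*N) = 1" unfolding N2[symmetric] using N0 by simp
  have e1: "(\<Sum>k<4. q0 k * q0 k) = 1"
  proof -
    have "(\<Sum>k<4. q0 k * q0 k) = (c 0 * c 0 + c 1 * c 1 + c 2 * c 2 + c 3 * c 3) / (N*N)"
      unfolding sum4 q0_def by (simp add: add_divide_distrib algebra_simps)
    also have "\<dots> = 1" by (rule nn)
    finally show ?thesis .
  qed
  have e2: "(\<Sum>k<4. q1 k * q1 k) = 1"
  proof -
    have "(\<Sum>k<4. q1 k * q1 k) = (c 0 * c 0 + c 1 * c 1 + c 2 * c 2 + c 3 * c 3) / (N*N)"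
      unfolding sum4 q1_def by (simp add: add_divide_distrib algebra_simps)
    also have "\<dots> = 1" by (rule nn)
    finally show ?thesis .
  qed
  have e3: "(\<Sum>k<4. q2 k * q2 k) = 1"
  proof -
    have "(\<Sum>k<4. q2 k * q2 k) = (c 0 * c 0 + c 1 * c 1 + c 2 * c 2 + c 3 * c 3) / (N*N)"
      unfolding sum4 q2_def by (simp add: add_divide_distrib algebra_simps)
    also have "\<dots> = 1" by (rule nn)
    finally show ?thesis .
  qed
  have e4: "(\<Sum>k<4. q0 k * q1 k) = 0" unfolding sum4 q0_def q1_def by (simp add: algebra_simps)
  have e5: "(\<Sum>k<4. q0 k * q2 k) = 0" unfolding sum4 q0_def q2_def by (simp add: algebra_simps)
  have e6: "(\<Sum>k<4. q1 k * q2 k) = 0" unfolding sum4 q1_def q2_def by (simp add: algebra_simps)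
  have e7: "(\<Sum>k<4. q0 k * c k) = 0" unfolding sum4 q0_def by (simp add: algebra_simps)
  have e8: "(\<Sum>k<4. q1 k * c k) = 0" unfolding sum4 q1_def by (simp add: algebra_simps)
  have e9: "(\<Sum>k<4. q2 k * c k) = 0" unfolding sum4 q2_def by (simp add: algebra_simps)
  show ?thesis using e1 e2 e3 e4 e5 e6 e7 e8 e9 by blast
qed

lemma swap3: "(\<Sum>i\<in>A. \<Sum>k\<in>B. \<Sum>l\<in>C. g i k l) = (\<Sum>k\<in>B. \<Sum>l\<in>C. \<Sum>i\<in>A. (g i k l :: real))"
proof -
  have "(\<Sum>i\<in>A. \<Sum>k\<in>B. \<Sum>l\<in>C. g i k l) = (\<Sum>k\<in>B. \<Sum>i\<in>A. \<Sum>l\<in>C. g i k l)" by (rule sum.swap)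
  also have "\<dots> = (\<Sum>k\<in>B. \<Sum>l\<in>C. \<Sum>i\<in>A. g i k l)" by (rule sum.cong[OF refl], rule sum.swap)
  finally show ?thesis .
qed

lemma bil:
  fixes p :: "nat \<Rightarrow> nat \<Rightarrow> real" and qa qb :: "nat \<Rightarrow> real"
  assumes orth: "\<And>k l. k<4 \<Longrightarrow> l<4 \<Longrightarrow> (\<Sum>i<n. p k i * p l i) = (if k = l then 1 else 0)"
  shows "(\<Sum>i<n. (\<Sum>k<4. qa k * p k i) * (\<Sum>k<4. qb k * p k i)) = (\<Sum>k<4. qa k * qb k)"
proof -
  have "(\<Sum>i<n. (\<Sum>k<4. qa k * p k i) * (\<Sum>k<4. qb k * p k i))
      = (\<Sum>i<n. \<Sum>k<4. \<Sum>l<4. qa k * qb l * (p k i * p l i))"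
    by (simp add: sum_product mult_ac)
  also have "\<dots> = (\<Sum>k<4. \<Sum>l<4. \<Sum>i<n. qa k * qb l * (p k i * p l i))" by (rule swap3)
  also have "\<dots> = (\<Sum>k<4. \<Sum>l<4. qa k * qb l * (if k = l then 1 else 0))"
    by (intro sum.cong refl) (simp add: sum_distrib_left[symmetric] orth)
  also have "\<dots> = (\<Sum>k<4. qa k * qb k)"
    by (simp add: if_distrib[of "\<lambda>z. _ * z"] sum.delta cong: if_cong)
  finally show ?thesis .
qed

lemma quadf:
  fixes p :: "nat \<Rightarrow> nat \<Rightarrow> real" and qa :: "nat \<Rightarrow> real" and M :: "nat \<Rightarrow> nat \<Rightarrow> real"
  assumes orth: "\<And>k l. k<4 \<Longrightarrow> l<4 \<Longrightarrow> (\<Sum>i<n. p k i * p l i) = (if k = l then 1 else 0)"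
    and eig: "\<And>k i. k<4 \<Longrightarrow> i<n \<Longrightarrow> (\<Sum>j<n. M i j * p k j) = lam k * p k i"
  shows "(\<Sum>i<n. \<Sum>j<n. M i j * ((\<Sum>k<4. qa k * p k i) * (\<Sum>k<4. qa k * p k j)))
     = (\<Sum>k<4. qa k * (lam k * qa k))"
proof -
  have st1: "(\<Sum>j<n. M i j * (\<Sum>l<4. qa l * p l j)) = (\<Sum>l<4. (lam l * qa l) * p l i)" if i: "i < n" for i
  proof -
    have "(\<Sum>j<n. M i j * (\<Sum>l<4. qa l * p l j)) = (\<Sum>j<n. \<Sum>l<4. qa l * (M i j * p l j))"
      by (simp add: sum_distrib_left mult_ac)
    also have "\<dots> = (\<Sum>l<4. \<Sum>j<n. qa l * (M i j * p l j))" by (rule sum.swap)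
    also have "\<dots> = (\<Sum>l<4. qa l * (lam l * p l i))"
      by (intro sum.cong refl) (simp add: sum_distrib_left[symmetric] eig i)
    finally show ?thesis by (simp add: mult_ac)
  qed
  have "(\<Sum>i<n. \<Sum>j<n. M i j * ((\<Sum>k<4. qa k * p k i) * (\<Sum>k<4. qa k * p k j)))
      = (\<Sum>i<n. (\<Sum>k<4. qa k * p k i) * (\<Sum>j<n. M i j * (\<Sum>k<4. qa k * p k j)))"
    by (simp add: sum_distrib_left mult_ac)
  also have "\<dots> = (\<Sum>i<n. (\<Sum>k<4. qa k * p k i) * (\<Sum>l<4. (lam l * qa l) * p l i))"
    by (intro sum.cong refl) (simp add: st1)
  also have "\<dots> = (\<Sum>k<4. qa k * (lam k * qa k))" by (rule bil[OF orth])
  finally show ?thesis .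
qed

lemma lin_sum:
  fixes p :: "nat \<Rightarrow> nat \<Rightarrow> real" and qa :: "nat \<Rightarrow> real"
  shows "(\<Sum>i<n. \<Sum>k<4. qa k * p k i) = (\<Sum>k<4. qa k * (\<Sum>i<n. p k i))"
  by (subst sum.swap) (simp add: sum_distrib_left)

lemma graph_from_eig:
  fixes n :: nat and E :: "nat \<Rightarrow> nat \<Rightarrow> bool" and p :: "nat \<Rightarrow> nat \<Rightarrow> real"
    and lam :: "nat \<Rightarrow> real" and x :: real
  assumes irr: "\<And>i. i < n \<Longrightarrow> \<not> E i i"
    and orth: "\<And>k l. k<4 \<Longrightarrow> l<4 \<Longrightarrow> (\<Sum>i<n. p k i * p l i) = (if k = l then 1 else 0)"
    and eig: "\<And>k i. k<4 \<Longrightarrow> i<n \<Longrightarrow> (\<Sum>j<n. (if E i j then 1 else 0) * p k j) = lam k * p k i"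
    and lamx: "\<And>k. k<4 \<Longrightarrow> x \<le> lam k"
  shows "x \<le> (1 + sqrt 5)/12 * real n - 1"
proof -
  define c where "c k = (\<Sum>i<n. p k i)" for k
  obtain q0 q1 q2 :: "nat \<Rightarrow> real" where
    e1: "(\<Sum>k<4. q0 k * q0 k) = 1" and e2: "(\<Sum>k<4. q1 k * q1 k) = 1" and e3: "(\<Sum>k<4. q2 k * q2 k) = 1"
    and e4: "(\<Sum>k<4. q0 k * q1 k) = 0" and e5: "(\<Sum>k<4. q0 k * q2 k) = 0" and e6: "(\<Sum>k<4. q1 k * q2 k) = 0"
    and e7: "(\<Sum>k<4. q0 k * c k) = 0" and e8: "(\<Sum>k<4. q1 k * c k) = 0" and e9: "(\<Sum>k<4. q2 k * c k) = 0"
    using quat[of c] by blast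
  define u0 where "u0 i = (\<Sum>k<4. q0 k * p k i)" for i
  define u1 where "u1 i = (\<Sum>k<4. q1 k * p k i)" for i
  define u2 where "u2 i = (\<Sum>k<4. q2 k * p k i)" for i
  note B = bil[OF orth]
  have o00: "(\<Sum>i<n. u0 i * u0 i) = 1" unfolding u0_def u0_def using B[of q0 q0] e1 by simp
  have o11: "(\<Sum>i<n. u1 i * u1 i) = 1" unfolding u1_def u1_def using B[of q1 q1] e2 by simp
  have o22: "(\<Sum>i<n. u2 i * u2 i) = 1" unfolding u2_def u2_def using B[of q2 q2] e3 by simp
  have o01: "(\<Sum>i<n. u0 i * u1 i) = 0" unfolding u0_def u1_def using B[of q0 q1] e4 by simp
  have o02: "(\<Sum>i<n. u0 i * u2 i) = 0" unfolding u0_def u2_def using B[of q0 q2] e5 by simp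
  have o12: "(\<Sum>i<n. u1 i * u2 i) = 0" unfolding u1_def u2_def using B[of q1 q2] e6 by simp
  have s0: "(\<Sum>i<n. u0 i) = 0" unfolding u0_def lin_sum c_def[symmetric] e7 ..
  have s1: "(\<Sum>i<n. u1 i) = 0" unfolding u1_def lin_sum c_def[symmetric] e8 ..
  have s2: "(\<Sum>i<n. u2 i) = 0" unfolding u2_def lin_sum c_def[symmetric] e9 ..
  define M where "M i j = (if E i j then 1 else 0 :: real)" for i j
  have eigM: "\<And>k i. k<4 \<Longrightarrow> i<n \<Longrightarrow> (\<Sum>j<n. M i j * p k j) = lam k * p k i"
    unfolding M_def by (rule eig)
  have qlow: "x \<le> (\<Sum>k<4. qa k * (lam k * qa k))" if "(\<Sum>k<4. qa k * qa k) = 1" for qa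
  proof -
    have "x = (\<Sum>k<4. x * (qa k * qa k))" using that by (simp add: sum_distrib_left[symmetric])
    also have "\<dots> \<le> (\<Sum>k<4. qa k * (lam k * qa k))"
    proof (intro sum_mono)
      fix k assume "k \<in> {..<(4::nat)}"
      hence "x \<le> lam k" using lamx by simp
      hence "x * (qa k * qa k) \<le> lam k * (qa k * qa k)" by (intro mult_right_mono) simp_all
      thus "x * (qa k * qa k) \<le> qa k * (lam k * qa k)" by (simp add: mult_ac)
    qed
    finally show ?thesis .
  qed
  have Q0: "x \<le> (\<Sum>i<n. \<Sum>j<n. M i j * (u0 i * u0 j))"
    unfolding u0_def using quadf[OF orth eigM, of q0] qlow[OF e1] by simp
  have Q1: "x \<le> (\<Sum>i<n. \<Sum>j<n. M i j * (u1 i * u1 j))"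
    unfolding u1_def using quadf[OF orth eigM, of q1] qlow[OF e2] by simp
  have Q2: "x \<le> (\<Sum>i<n. \<Sum>j<n. M i j * (u2 i * u2 j))"
    unfolding u2_def using quadf[OF orth eigM, of q2] qlow[OF e3] by simp
  define t where "t i j = u0 i*u0 j + u1 i*u1 j + u2 i*u2 j" for i j
  have FB: "(\<Sum>i<n. \<Sum>j<n. \<bar>t i j\<bar>) \<le> (1 + sqrt 5)/2 * real n"
    unfolding t_def by (rule frame_bound[OF o00 o11 o22 o01 o02 o12])
  have sp: "(\<Sum>i<n. \<Sum>j<n. f i * f j) = (\<Sum>i<n. f i) * (\<Sum>i<n. f i)" for f :: "nat \<Rightarrow> real"
    by (simp add: sum_product)
  have T1: "(\<Sum>i<n. \<Sum>j<n. t i j) = 0"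
    unfolding t_def by (simp add: sum.distrib sp s0 s1 s2)
  have T2: "(\<Sum>i<n. t i i) = 3"
    unfolding t_def using o00 o11 o22 by (simp add: sum.distrib)
  have T3: "3 * x \<le> (\<Sum>i<n. \<Sum>j<n. M i j * t i j)"
  proof -
    have "(\<Sum>i<n. \<Sum>j<n. M i j * t i j) = (\<Sum>i<n. \<Sum>j<n. M i j * (u0 i * u0 j))
       + (\<Sum>i<n. \<Sum>j<n. M i j * (u1 i * u1 j)) + (\<Sum>i<n. \<Sum>j<n. M i j * (u2 i * u2 j))"
      unfolding t_def by (simp add: sum.distrib distrib_left)
    thus ?thesis using Q0 Q1 Q2 by linarith
  qed
  have pw: "(t i j - \<bar>t i j\<bar>)/2 \<le> t i j - M i j * t i j - (if i = j then t i j else 0)"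
    if "i < n" for i j
    using irr[OF that] unfolding M_def by (cases "i = j") auto
  have D: "(\<Sum>i<n. \<Sum>j<n. (if i = j then t i j else 0)) = (\<Sum>i<n. t i i)"
    by (intro sum.cong refl) (simp add: sum.delta)
  have "(\<Sum>i<n. \<Sum>j<n. (t i j - \<bar>t i j\<bar>)/2) \<le> (\<Sum>i<n. \<Sum>j<n. t i j - M i j * t i j - (if i = j then t i j else 0))"
    by (intro sum_mono pw) simp
  also have "\<dots> = (\<Sum>i<n. \<Sum>j<n. t i j) - (\<Sum>i<n. \<Sum>j<n. M i j * t i j) - (\<Sum>i<n. \<Sum>j<n. (if i = j then t i j else 0))"
    by (simp add: sum_subtractf)
  finally have "(\<Sum>i<n. \<Sum>j<n. (t i j - \<bar>t i j\<bar>)/2) \<le> 0 - (\<Sum>i<n. \<Sum>j<n. M i j * t i j) - 3"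
    unfolding D T1 T2 .
  moreover have "(\<Sum>i<n. \<Sum>j<n. (t i j - \<bar>t i j\<bar>)/2) = ((\<Sum>i<n. \<Sum>j<n. t i j) - (\<Sum>i<n. \<Sum>j<n. \<bar>t i j\<bar>))/2"
    by (simp add: diff_divide_distrib sum_divide_distrib[symmetric] sum_subtractf)
  moreover have key: "\<And>T S P Q x::real. P \<le> 0 - Q - 3 \<Longrightarrow> P = (T - S)/2 \<Longrightarrow> T = 0 \<Longrightarrow> 3*x \<le> Q \<Longrightarrow> 6*x+6 \<le> S"
    by (simp add: field_simps)
  ultimately have "6 * x + 6 \<le> (\<Sum>i<n. \<Sum>j<n. \<bar>t i j\<bar>)" using T1 T3 by blast
  with FB show ?thesis by linarith
qed


lemma conj_real_vec[simp]: "conjugate (w :: real vec) = w"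
  by (rule eq_vecI) auto

lemma sprod_self_nonneg: "0 \<le> (w :: real vec) \<bullet> w"
  unfolding scalar_prod_def by (intro sum_nonneg) simp

lemma spectral_sym:
  fixes A :: "real mat"
  assumes "A \<in> carrier_mat n n" "transpose_mat A = A" "char_poly A = (\<Prod>e\<leftarrow>es. [:-e,1:])"
  shows "\<exists>P. P \<in> carrier_mat n n \<and> transpose_mat P * P = 1\<^sub>m n \<and> A * P = P * mat_diag n (\<lambda>i. es!i)"
  using assms
proof (induct es arbitrary: n A)
  case Nil
  hence A: "A \<in> carrier_mat n n" and cp: "char_poly A = 1" by auto
  from degree_monic_char_poly[OF A] cp have n: "n = 0" by auto
  show ?case
    by (rule exI[of _ "1\<^sub>m 0"]) (use A n in \<open>auto intro!: eq_matI simp: mat_diag_def\<close>)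
next
  case (Cons e es n A)
  from Cons.prems have A: "A \<in> carrier_mat n n" and sym: "transpose_mat A = A"
    and cp: "char_poly A = [:-e,1:] * (\<Prod>e\<leftarrow>es. [:-e,1:])" by auto
  have ev: "eigenvalue A e" unfolding eigenvalue_root_char_poly[OF A] cp by simp
  define v where "v = find_eigenvector A e"
  from find_eigenvector[OF A ev, folded v_def, unfolded eigenvector_def] A
  have v: "v \<in> carrier_vec n" and v0: "v \<noteq> 0\<^sub>v n" and Av: "A *\<^sub>v v = e \<cdot>\<^sub>v v" by auto
  have n0: "n \<noteq> 0" using v v0 by (intro notI) (auto intro!: eq_vecI)
  interpret cof_vec_space n "TYPE(real)" .
  define b where "b = basis_completion v"
  from basis_completion[OF v v0, folded b_def]
  have b: "set b \<subseteq> carrier_vec n" and dist_b: "distinct b" and indep: "\<not> lin_dep (set b)"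
    and hdb: "hd b = v" and len_b: "length b = n" by auto
  define ws where "ws = gram_schmidt n b"
  from gram_schmidt_result[OF b dist_b indep ws_def]
  have ws: "set ws \<subseteq> carrier_vec n" "corthogonal ws" "length ws = n" by (auto simp: len_b)
  from hdb len_b n0 obtain vs where bv: "b = v # vs" by (cases b) auto
  have hdws: "hd ws = v" unfolding ws_def bv using v by simp
  have ws0: "ws ! 0 = v" using hdws ws(3) n0 by (metis hd_conv_nth length_0_conv)
  have wsc: "ws ! i \<in> carrier_vec n" if "i < n" for i using ws that by auto
  have wsorth: "(ws ! i \<bullet> ws ! j = 0) \<longleftrightarrow> i \<noteq> j" if "i < n" "j < n" for i j
    using corthogonalD[OF ws(2)] ws(3) that by simp
  have pos: "ws ! i \<bullet> ws ! i > 0" if "i < n" for i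
    using wsorth[OF that that] sprod_self_nonneg[of "ws ! i"] by simp
  define nr where "nr i = 1 / sqrt (ws ! i \<bullet> ws ! i)" for i
  define us where "us = map (\<lambda>i. nr i \<cdot>\<^sub>v ws ! i) [0..<n]"
  define W where "W = mat_of_cols n us"
  have W: "W \<in> carrier_mat n n" unfolding W_def us_def by auto
  have colW: "col W i = nr i \<cdot>\<^sub>v ws ! i" if "i < n" for i
    unfolding W_def us_def using wsc that by (subst col_mat_of_cols) auto
  have colWc: "col W i \<in> carrier_vec n" if "i < n" for i using W that by auto
  have ON: "col W i \<bullet> col W j = (if i = j then 1 else 0)" if i: "i < n" and j: "j < n" for i j
  proof -
    have "col W i \<bullet> col W j = nr i * nr j * (ws!i \<bullet> ws!j)"
      using colW[OF i] colW[OF j] wsc[OF i] wsc[OF j]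
      by (simp add: smult_scalar_prod_distrib scalar_prod_smult_distrib)
    also have "\<dots> = (if i = j then 1 else 0)"
    proof (cases "i = j")
      case True
      have "nr i * nr i * (ws!i \<bullet> ws!i) = 1" unfolding nr_def using pos[OF i]
        by (simp add: field_simps)
      thus ?thesis using True by simp
    next
      case False thus ?thesis using wsorth[OF i j] by simp
    qed
    finally show ?thesis .
  qed
  have WtW: "transpose_mat W * W = 1\<^sub>m n"
    by (rule eq_matI) (use W ON in auto)
  have WWt: "W * transpose_mat W = 1\<^sub>m n"
    using mat_mult_left_right_inverse[OF _ W WtW] W by auto
  define A' where "A' = transpose_mat W * A * W"
  have Wt: "transpose_mat W \<in> carrier_mat n n" using W by simp
  have A': "A' \<in> carrier_mat n n" unfolding A'_def using W A by simp
  have symA': "transpose_mat A' = A'"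
  proof -
    have "transpose_mat A' = transpose_mat W * transpose_mat (transpose_mat W * A)"
      unfolding A'_def by (rule transpose_mult[of _ n n _ n]) (use W A in auto)
    also have "transpose_mat (transpose_mat W * A) = transpose_mat A * W"
      by (subst transpose_mult[of _ n n _ n]) (use W A in auto)
    finally show ?thesis unfolding sym A'_def using W A by (simp add: assoc_mult_mat[of _ n n _ n _ n])
  qed
  have col0: "col W 0 = nr 0 \<cdot>\<^sub>v v" using colW[of 0] n0 ws0 by simp
  have AW0: "A *\<^sub>v col W 0 = e \<cdot>\<^sub>v col W 0"
    unfolding col0 using A v Av by (simp add: mult_mat_vec smult_smult_assoc mult.commute)
  have A'0: "A' $$ (i,0) = (if i = 0 then e else 0)" if i: "i < n" for i
  proof -
    have "A' $$ (i,0) = row (transpose_mat W) i \<bullet> col (A * W) 0"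
      unfolding A'_def using W A i n0 by (subst assoc_mult_mat[of _ n n _ n _ n]) auto
    also have "\<dots> = col W i \<bullet> (e \<cdot>\<^sub>v col W 0)"
    proof -
      have r1: "row (transpose_mat W) i = col W i" using W i by simp
      have c1: "col (A * W) 0 = e \<cdot>\<^sub>v col W 0" using A W n0 AW0 by (subst col_mult2) auto
      show ?thesis unfolding r1 c1 ..
    qed
    also have "\<dots> = e * (col W i \<bullet> col W 0)" using colWc i n0 by simp
    also have "\<dots> = (if i = 0 then e else 0)" using ON[OF i] n0 by simp
    finally show ?thesis .
  qed
  obtain A1 A2 A0 A3 where sb: "split_block A' 1 1 = (A1,A2,A0,A3)" by (cases "split_block A' 1 1")
  have dims: "dim_row A' = 1 + (n-1)" "dim_col A' = 1 + (n-1)" using A' n0 by auto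
  note spl = split_block[OF sb dims]
  have A1c: "A1 \<in> carrier_mat 1 1" and A2c: "A2 \<in> carrier_mat 1 (n-1)" and A0c: "A0 \<in> carrier_mat (n-1) 1"
    and A3c: "A3 \<in> carrier_mat (n-1) (n-1)" and A'blk0: "A' = four_block_mat A1 A2 A0 A3" using spl by auto
  have A1: "A1 = mat 1 1 (\<lambda>_. e)"
    using sb A'0 n0 unfolding split_block_def Let_def by (auto intro!: eq_matI)
  have A0: "A0 = 0\<^sub>m (n-1) 1"
    using sb A'0 A' unfolding split_block_def Let_def by (auto intro!: eq_matI)
  have A'sym: "A' $$ (i,j) = A' $$ (j,i)" if "i < n" "j < n" for i j
    using arg_cong[OF symA', of "\<lambda>M. M $$ (j,i)"] that A' by simp
  have A'0r: "A' $$ (0,j) = (if j = 0 then e else 0)" if "j < n" for j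
    using A'sym[OF _ that] A'0[OF that] n0 by simp
  have A2: "A2 = 0\<^sub>m 1 (n-1)"
    using sb A'0r A' unfolding split_block_def Let_def by (auto intro!: eq_matI)
  have A3sym: "transpose_mat A3 = A3"
    using sb A' A'sym unfolding split_block_def Let_def by (auto intro!: eq_matI)
  have A'blk: "A' = four_block_mat A1 (0\<^sub>m 1 (n-1)) (0\<^sub>m (n-1) 1) A3"
    using A'blk0 A0 A2 by simp
  have simA: "similar_mat A' A"
    unfolding similar_mat_def similar_mat_wit_def
    by (rule exI[of _ "transpose_mat W"], rule exI[of _ W]) (use A' A W WtW WWt in \<open>auto simp: A'_def Let_def\<close>)
  have cpA1: "char_poly A1 = [:-e,1:]"
    by (simp add: A1 char_poly_defs det_def sign_def)
  have "char_poly A' = char_poly A1 * char_poly A3"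
    unfolding A'blk by (rule char_poly_four_block_zeros_col[OF A1c _ A3c]) simp
  hence "[:-e,1:] * (\<Prod>e\<leftarrow>es. [:-e,1:]) = [:-e,1:] * char_poly A3"
    using char_poly_similar[OF simA] cp cpA1 by simp
  hence cpA3: "char_poly A3 = (\<Prod>e\<leftarrow>es. [:-e,1:])"
    by (metis mult_cancel_left pCons_eq_0_iff zero_neq_one)
  from Cons.hyps[OF A3c A3sym cpA3] obtain P3 where P3: "P3 \<in> carrier_mat (n-1) (n-1)"
    and P3o: "transpose_mat P3 * P3 = 1\<^sub>m (n-1)"
    and P3e: "A3 * P3 = P3 * mat_diag (n-1) (\<lambda>i. es!i)" by blast
  define X where "X = four_block_mat (1\<^sub>m 1) (0\<^sub>m 1 (n-1)) (0\<^sub>m (n-1) 1) P3"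
  have nn: "1 + (n-1) = n" using n0 by simp
  have X: "X \<in> carrier_mat n n" unfolding X_def using P3 nn
    by (metis four_block_carrier_mat one_carrier_mat)
  define P where "P = W * X"
  have P: "P \<in> carrier_mat n n" unfolding P_def using W X by simp
  define D3 where "D3 = mat_diag (n-1) (\<lambda>i. es!i)"
  have D3: "D3 \<in> carrier_mat (n-1) (n-1)" unfolding D3_def by simp
  have D: "mat_diag n (\<lambda>i. (e#es)!i) = four_block_mat A1 (0\<^sub>m 1 (n-1)) (0\<^sub>m (n-1) 1) D3"
    unfolding A1 D3_def using n0 by (auto intro!: eq_matI simp: mat_diag_def)
  have XtX: "transpose_mat X * X = 1\<^sub>m n"
  proof -
    have tX: "transpose_mat X = four_block_mat (1\<^sub>m 1) (0\<^sub>m 1 (n-1)) (0\<^sub>m (n-1) 1) (transpose_mat P3)"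
      unfolding X_def using P3 by (subst transpose_four_block_mat) auto
    have "transpose_mat X * X = four_block_mat (1\<^sub>m 1) (0\<^sub>m 1 (n-1)) (0\<^sub>m (n-1) 1) (1\<^sub>m (n-1))"
      unfolding tX unfolding X_def using P3 P3o
      by (subst mult_four_block_mat[OF one_carrier_mat zero_carrier_mat zero_carrier_mat _ one_carrier_mat zero_carrier_mat zero_carrier_mat P3]) auto
    thus ?thesis using four_block_one_mat[of 1 "n-1"] nn by simp
  qed
  show ?case
  proof (intro exI[of _ P] conjI P)
    have "transpose_mat P * P = transpose_mat X * (transpose_mat W * W) * X"
      unfolding P_def using W X
      by (simp add: transpose_mult[of _ n n] assoc_mult_mat[of _ n n _ n _ n])
    also have "\<dots> = 1\<^sub>m n" using WtW XtX X by simp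
    finally show "transpose_mat P * P = 1\<^sub>m n" .
  next
    have AW: "A * W = W * A'"
    proof -
      have "W * A' = (W * transpose_mat W) * (A * W)"
        unfolding A'_def using W A by (simp add: assoc_mult_mat[of _ n n _ n _ n])
      thus ?thesis using WWt A W by simp
    qed
    have A'X: "A' * X = four_block_mat A1 (0\<^sub>m 1 (n-1)) (0\<^sub>m (n-1) 1) (A3 * P3)"
      unfolding A'blk X_def using A1c A3c P3
      by (subst mult_four_block_mat[OF A1c zero_carrier_mat zero_carrier_mat A3c one_carrier_mat zero_carrier_mat zero_carrier_mat P3]) auto
    have XD: "X * four_block_mat A1 (0\<^sub>m 1 (n-1)) (0\<^sub>m (n-1) 1) D3 = four_block_mat A1 (0\<^sub>m 1 (n-1)) (0\<^sub>m (n-1) 1) (P3 * D3)"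
      unfolding X_def using A1c D3 P3
      by (subst mult_four_block_mat[OF one_carrier_mat zero_carrier_mat zero_carrier_mat P3 A1c zero_carrier_mat zero_carrier_mat D3]) auto
    have "A * P = (A * W) * X" unfolding P_def using A W X by (rule assoc_mult_mat[symmetric])
    also have "\<dots> = (W * A') * X" unfolding AW ..
    also have "\<dots> = W * (A' * X)" using W A' X by (rule assoc_mult_mat)
    also have "\<dots> = W * (X * mat_diag n (\<lambda>i. (e#es)!i))"
    proof -
      have "A' * X = four_block_mat A1 (0\<^sub>m 1 (n-1)) (0\<^sub>m (n-1) 1) (P3 * D3)"
        unfolding A'X P3e D3_def ..
      also have "\<dots> = X * four_block_mat A1 (0\<^sub>m 1 (n-1)) (0\<^sub>m (n-1) 1) D3"
        by (rule XD[symmetric])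
      also have "\<dots> = X * mat_diag n (\<lambda>i. (e#es)!i)" by (simp only: D)
      finally show ?thesis by simp
    qed
    also have "\<dots> = P * mat_diag n (\<lambda>i. (e#es)!i)" unfolding P_def using W X
      by (simp add: assoc_mult_mat[of _ n n _ n _ n])
    finally show "A * P = P * mat_diag n (\<lambda>i. (e#es)!i)" .
  qed
qed

lemma sym_real_eigen:
  fixes A :: "real mat" and a :: complex
  assumes A: "A \<in> carrier_mat n n" and sym: "transpose_mat A = A"
    and ev: "eigenvalue (map_mat complex_of_real A) a"
  shows "Im a = 0"
proof -
  define Ac where "Ac = map_mat complex_of_real A"
  have Ac: "Ac \<in> carrier_mat n n" unfolding Ac_def using A by simp
  from ev obtain v where "eigenvector Ac v a" unfolding eigenvalue_def Ac_def by blast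
  hence v: "v \<in> carrier_vec n" and v0: "v \<noteq> 0\<^sub>v n" and Av: "Ac *\<^sub>v v = a \<cdot>\<^sub>v v"
    unfolding eigenvector_def using Ac by auto
  have Asym: "A $$ (i,j) = A $$ (j,i)" if "i < n" "j < n" for i j
    using arg_cong[OF sym, of "\<lambda>M. M $$ (j,i)"] that A by simp
  have row: "(\<Sum>j<n. of_real (A $$ (i,j)) * v $ j) = a * v $ i" if i: "i < n" for i
  proof -
    have "(Ac *\<^sub>v v) $ i = (\<Sum>j<n. of_real (A $$ (i,j)) * v $ j)"
      using Ac A v i unfolding Ac_def by (auto simp: scalar_prod_def lessThan_atLeast0 intro!: sum.cong)
    thus ?thesis using Av i v by simp
  qed
  define s where "s = (\<Sum>i<n. cnj (v $ i) * (\<Sum>j<n. of_real (A $$ (i,j)) * v $ j))"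
  define r where "r = (\<Sum>i<n. cnj (v $ i) * v $ i)"
  have "s = (\<Sum>i<n. cnj (v $ i) * (a * v $ i))" unfolding s_def
    by (intro sum.cong refl) (simp add: row)
  hence s1: "s = a * r" unfolding r_def by (simp add: sum_distrib_left mult_ac)
  have s2: "cnj s = s"
  proof -
    have "cnj s = (\<Sum>i<n. \<Sum>j<n. v $ i * (of_real (A $$ (i,j)) * cnj (v $ j)))"
      unfolding s_def by (simp add: sum_distrib_left)
    also have "\<dots> = (\<Sum>j<n. \<Sum>i<n. v $ i * (of_real (A $$ (i,j)) * cnj (v $ j)))" by (rule sum.swap)
    also have "\<dots> = (\<Sum>j<n. cnj (v $ j) * (\<Sum>i<n. of_real (A $$ (j,i)) * v $ i))"
      by (intro sum.cong refl) (simp add: sum_distrib_left Asym mult_ac)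
    finally show ?thesis unfolding s_def .
  qed
  have rr: "r = of_real (\<Sum>i<n. (cmod (v $ i))^2)"
    unfolding r_def of_real_sum by (rule sum.cong[OF refl]) (metis complex_norm_square mult.commute)
  have "\<exists>i<n. v $ i \<noteq> 0" using v v0 by (metis eq_vecI carrier_vecD index_zero_vec)
  then obtain i0 where i0: "i0 < n" "v $ i0 \<noteq> 0" by blast
  have rpos: "(\<Sum>i<n. (cmod (v $ i))^2) > 0"
  proof -
    have "(\<Sum>i<n. (cmod (v $ i))^2) \<ge> (cmod (v $ i0))^2"
      using i0 by (intro member_le_sum) auto
    moreover have "(cmod (v $ i0))^2 > 0" using i0 by simp
    ultimately show ?thesis by linarith
  qed
  have "Im s = 0" using s2 by (metis Reals_cnj_iff complex_is_Real_iff)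
  hence "Im a * (\<Sum>i<n. (cmod (v $ i))^2) = 0" unfolding s1 rr by simp
  thus ?thesis using rpos by simp
qed

lemma real_split:
  fixes A :: "real mat"
  assumes A: "A \<in> carrier_mat n n" and sym: "transpose_mat A = A"
  shows "\<exists>es. char_poly A = (\<Prod>e\<leftarrow>es. [:-e,1:])"
proof -
  interpret rp: map_poly_inj_comm_ring_hom "of_real :: real \<Rightarrow> complex" ..
  define Ac where "Ac = map_mat complex_of_real A"
  have Ac: "Ac \<in> carrier_mat n n" unfolding Ac_def using A by simp
  from char_poly_factorized[OF Ac] obtain as where cpc: "char_poly Ac = (\<Prod>a\<leftarrow>as. [:- a, 1:])" by blast
  have cph: "char_poly Ac = map_poly of_real (char_poly A)"
    unfolding Ac_def using of_real_hom.char_poly_hom[OF A] by simp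
  have real: "Im a = 0" if a: "a \<in> set as" for a
  proof -
    have "poly (char_poly Ac) a = 0" unfolding cpc using a
      by (induct as) auto
    hence "eigenvalue Ac a" using eigenvalue_root_char_poly[OF Ac] by simp
    thus ?thesis using sym_real_eigen[OF A sym] unfolding Ac_def by blast
  qed
  define es where "es = map Re as"
  have "map_poly (of_real :: real \<Rightarrow> complex) (\<Prod>e\<leftarrow>es. [:-e,1:]) = (\<Prod>e\<leftarrow>es. map_poly of_real [:-e,1:])"
    by (simp add: rp.hom_prod_list o_def)
  also have "\<dots> = (\<Prod>a\<leftarrow>as. [:- a, 1:])" unfolding es_def using real
    by (induct as) (auto simp: complex_eq_iff)
  finally have "map_poly (of_real :: real \<Rightarrow> complex) (\<Prod>e\<leftarrow>es. [:-e,1:]) = map_poly of_real (char_poly A)"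
    using cpc cph by simp
  hence "char_poly A = (\<Prod>e\<leftarrow>es. [:-e,1:])" using rp.injectivity by metis
  thus ?thesis by blast
qed


lemma proots_linprod: "proots (\<Prod>e\<leftarrow>es. [:-e,1:]) = mset (es :: real list)"
proof (induct es)
  case (Cons a es)
  have nz: "(\<Prod>e\<leftarrow>es. [:-e,1:]) \<noteq> (0 :: real poly)"
    by (auto simp: prod_list_zero_iff)
  have "proots ([:-a,1:] * (\<Prod>e\<leftarrow>es. [:-e,1:])) = proots [:-a,1:] + proots (\<Prod>e\<leftarrow>es. [:-e,1:])"
    using nz by (intro proots_mult) auto
  thus ?case using Cons by simp
qed simp

lemma adj_spectral:
  assumes sg: "simple_graph n E"
  shows "\<exists>P. P \<in> carrier_mat n n \<and> transpose_mat P * P = 1\<^sub>m n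
    \<and> adj_matrix n E * P = P * mat_diag n (\<lambda>i. adj_eigenvalues n E ! i)
    \<and> length (adj_eigenvalues n E) = n \<and> sorted_wrt (\<ge>) (adj_eigenvalues n E)"
proof -
  define A where "A = adj_matrix n E"
  define L where "L = adj_eigenvalues n E"
  have A: "A \<in> carrier_mat n n" unfolding A_def adj_matrix_def by simp
  have sym: "transpose_mat A = A" using sg unfolding A_def adj_matrix_def simple_graph_def
    by (auto intro!: eq_matI)
  obtain es where cp: "char_poly A = (\<Prod>e\<leftarrow>es. [:-e,1:])" using real_split[OF A sym] by blast
  have Ldef: "L = rev (sorted_list_of_multiset (mset es))"
    unfolding L_def adj_eigenvalues_def A_def[symmetric] cp proots_linprod ..
  have mL: "mset L = mset es" by (simp add: Ldef)
  have cpL: "char_poly A = (\<Prod>e\<leftarrow>L. [:-e,1:])"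
  proof -
    have "(\<Prod>e\<leftarrow>L. [:-e,1:]) = prod_mset (image_mset (\<lambda>e. [:-e,1:]) (mset L))"
      by (simp add: prod_mset_prod_list[symmetric])
    also have "\<dots> = (\<Prod>e\<leftarrow>es. [:-e,1:])" unfolding mL by (simp add: prod_mset_prod_list[symmetric])
    finally show ?thesis using cp by simp
  qed
  have len: "length L = n"
  proof -
    have "degree (char_poly A) = n" using degree_monic_char_poly[OF A] by simp
    moreover have "degree (\<Prod>e\<leftarrow>L. [:-e,1:]) = length L"
      using degree_linear_factors[of uminus L] by simp
    ultimately show ?thesis using cpL by simp
  qed
  have sorted: "sorted_wrt (\<ge>) L"
    unfolding Ldef sorted_wrt_rev by simp
  from spectral_sym[OF A sym cpL] obtain P where "P \<in> carrier_mat n n" "transpose_mat P * P = 1\<^sub>m n"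
    "A * P = P * mat_diag n (\<lambda>i. L!i)" by blast
  thus ?thesis using len sorted unfolding A_def L_def by blast
qed

theorem mainTheorem5:
  fixes n :: nat and E :: "nat \<Rightarrow> nat \<Rightarrow> bool"
  assumes "simple_graph n E" and "n \<ge> 4"
  shows "graph_lambda n E 4 \<le> (1 + sqrt 5) / 12 * real n - 1"
proof -
  note sg = assms(1)
  define L where "L = adj_eigenvalues n E"
  define A where "A = adj_matrix n E"
  have A: "A \<in> carrier_mat n n" unfolding A_def adj_matrix_def by simp
  obtain P where P: "P \<in> carrier_mat n n" and PtP: "transpose_mat P * P = 1\<^sub>m n"
    and AP: "A * P = P * mat_diag n (\<lambda>i. L ! i)" and len: "length L = n"
    and sorted: "sorted_wrt (\<ge>) L"
    using adj_spectral[OF sg] unfolding A_def L_def by blast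
  have gl: "graph_lambda n E 4 = L ! 3" unfolding graph_lambda_def L_def by simp
  define p where "p k i = P $$ (i,k)" for k i
  have orth: "(\<Sum>i<n. p k i * p l i) = (if k = l then 1 else 0)" if "k < 4" "l < 4" for k l
  proof -
    have kl: "k < n" "l < n" using that assms(2) by auto
    have "(transpose_mat P * P) $$ (k,l) = (\<Sum>i<n. p k i * p l i)"
      using P kl unfolding p_def by (simp add: scalar_prod_def lessThan_atLeast0)
    thus ?thesis using PtP kl by simp
  qed
  have eig: "(\<Sum>j<n. (if E i j then 1 else 0) * p k j) = L ! k * p k i" if "k < 4" "i < n" for k i
  proof -
    have k: "k < n" using that assms(2) by auto
    have "(A * P) $$ (i,k) = (\<Sum>j<n. (if E i j then 1 else 0) * p k j)"
      using P A k that unfolding p_def A_def adj_matrix_def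
      by (simp add: scalar_prod_def lessThan_atLeast0)
    moreover have "(P * mat_diag n (\<lambda>i. L ! i)) $$ (i,k) = L ! k * p k i"
      using P k that unfolding p_def by (simp add: mat_diag_mult_right[OF P])
    ultimately show ?thesis using AP by simp
  qed
  have lamx: "L ! 3 \<le> L ! k" if "k < 4" for k
  proof (cases "k = 3")
    case False
    hence "k < 3" using that by simp
    thus ?thesis using sorted_wrt_nth_less[OF sorted, of k 3] len assms(2) by simp
  qed simp
  have irr: "\<not> E i i" if "i < n" for i using sg that unfolding simple_graph_def by blast
  have "L ! 3 \<le> (1 + sqrt 5)/12 * real n - 1"
    by (rule graph_from_eig[of n E p "\<lambda>k. L ! k"]) (use irr orth eig lamx in auto)
  thus ?thesis unfolding gl .
qed

end
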